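(* Let $p\in(1,\infty)$, let $A$ be a norm closed subalgebra of $\mathcal B(L^p(X,\mu))$, let $B=L^\infty(Y,\nu)$, regarded as the algebra of multiplication operators on $L^p(Y,\nu)$, and let $\varphi:A\to B$ be a bounded linear map. Then $\|\varphi\|_{pcb}=\|\varphi\|$.
   Context: $M_n^p=\mathcal B(\ell^p_n)$; for a norm closed subalgebra $A\subset\mathcal B(L^p(X,\mu))$, $M_n^p\otimes_pA\subset\mathcal B(L^p(\{1,\dots,n\}\times X))$ is the algebra of matrices $[a_{ij}]$ with entries in $A$. For linear $\varphi:A\to B$, $\varphi_n([a_{ij}])=[\varphi(a_{ij})]$ and $\|\varphi\|_{pcb}=\sup_n\|\varphi_n\|$. *)

theory Defs
  imports "HOL-Analysis.Analysis"
begin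

text \<open>Complex L^p spaces, represented by representatives (functions), with
  equality almost everywhere handled explicitly.\<close>

type_synonym 'a Lp_op = "('a \<Rightarrow> complex) \<Rightarrow> 'a \<Rightarrow> complex"

definition Lp :: "real \<Rightarrow> 'a measure \<Rightarrow> ('a \<Rightarrow> complex) set" where
  "Lp p M = {f. f \<in> borel_measurable M \<and> integrable M (\<lambda>x. cmod (f x) powr p)}"

definition Lp_norm :: "real \<Rightarrow> 'a measure \<Rightarrow> ('a \<Rightarrow> complex) \<Rightarrow> real" where
  "Lp_norm p M f = (\<integral>x. cmod (f x) powr p \<partial>M) powr (1 / p)"

definition ae_eq :: "'a measure \<Rightarrow> ('a \<Rightarrow> complex) \<Rightarrow> ('a \<Rightarrow> complex) \<Rightarrow> bool" where
  "ae_eq M f g \<longleftrightarrow> (AE x in M. f x = g x)"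

definition is_bounded_op :: "real \<Rightarrow> 'a measure \<Rightarrow> 'a Lp_op \<Rightarrow> bool" where
  "is_bounded_op p M T \<longleftrightarrow>
     (\<forall>f\<in>Lp p M. T f \<in> Lp p M) \<and>
     (\<forall>f\<in>Lp p M. \<forall>g\<in>Lp p M. ae_eq M (T (\<lambda>x. f x + g x)) (\<lambda>x. T f x + T g x)) \<and>
     (\<forall>c. \<forall>f\<in>Lp p M. ae_eq M (T (\<lambda>x. c * f x)) (\<lambda>x. c * T f x)) \<and>
     (\<exists>C. \<forall>f\<in>Lp p M. Lp_norm p M (T f) \<le> C * Lp_norm p M f)"

definition op_norm :: "real \<Rightarrow> 'a measure \<Rightarrow> 'a Lp_op \<Rightarrow> real" where
  "op_norm p M T = (SUP f \<in> {f \<in> Lp p M. Lp_norm p M f \<le> 1}. Lp_norm p M (T f))"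

definition op_eq :: "real \<Rightarrow> 'a measure \<Rightarrow> 'a Lp_op \<Rightarrow> 'a Lp_op \<Rightarrow> bool" where
  "op_eq p M S T \<longleftrightarrow> (\<forall>f\<in>Lp p M. ae_eq M (S f) (T f))"

definition op_add :: "'a Lp_op \<Rightarrow> 'a Lp_op \<Rightarrow> 'a Lp_op" where
  "op_add S T = (\<lambda>f x. S f x + T f x)"

definition op_scale :: "complex \<Rightarrow> 'a Lp_op \<Rightarrow> 'a Lp_op" where
  "op_scale c T = (\<lambda>f x. c * T f x)"

definition op_diff :: "'a Lp_op \<Rightarrow> 'a Lp_op \<Rightarrow> 'a Lp_op" where
  "op_diff S T = (\<lambda>f x. S f x - T f x)"

definition op_comp :: "'a Lp_op \<Rightarrow> 'a Lp_op \<Rightarrow> 'a Lp_op" where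
  "op_comp S T = (\<lambda>f. S (T f))"

definition norm_closed_subalgebra :: "real \<Rightarrow> 'a measure \<Rightarrow> 'a Lp_op set \<Rightarrow> bool" where
  "norm_closed_subalgebra p M A \<longleftrightarrow>
     A \<subseteq> {T. is_bounded_op p M T} \<and>
     (\<lambda>f x. 0) \<in> A \<and>
     (\<forall>S\<in>A. \<forall>T\<in>A. op_add S T \<in> A) \<and>
     (\<forall>c. \<forall>T\<in>A. op_scale c T \<in> A) \<and>
     (\<forall>S\<in>A. \<forall>T\<in>A. op_comp S T \<in> A) \<and>
     (\<forall>a T. (\<forall>k. a k \<in> A) \<longrightarrow> is_bounded_op p M T \<longrightarrow>
        (\<lambda>k. op_norm p M (op_diff (a k) T)) \<longlonglongrightarrow> 0 \<longrightarrow> T \<in> A)"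

definition Linf_mult_ops :: "'b measure \<Rightarrow> 'b Lp_op set" where
  "Linf_mult_ops N = {T. \<exists>g. g \<in> borel_measurable N \<and> (\<exists>C. AE y in N. cmod (g y) \<le> C) \<and>
                           T = (\<lambda>f y. g y * f y)}"

text \<open>L^p({0..<n} \<times> X) identified with n-tuples of elements of L^p(X),
  with norm (\<Sum>i. \<parallel>F i\<parallel>_p^p)^(1/p); n \<times> n matrices act by matrix multiplication.\<close>
definition Lp_n :: "real \<Rightarrow> 'a measure \<Rightarrow> nat \<Rightarrow> (nat \<Rightarrow> 'a \<Rightarrow> complex) set" where
  "Lp_n p M n = {F. \<forall>i<n. F i \<in> Lp p M}"

definition Lp_n_norm :: "real \<Rightarrow> 'a measure \<Rightarrow> nat \<Rightarrow> (nat \<Rightarrow> 'a \<Rightarrow> complex) \<Rightarrow> real" where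
  "Lp_n_norm p M n F = (\<Sum>i<n. Lp_norm p M (F i) powr p) powr (1 / p)"

definition mat_apply :: "nat \<Rightarrow> (nat \<Rightarrow> nat \<Rightarrow> 'a Lp_op) \<Rightarrow> (nat \<Rightarrow> 'a \<Rightarrow> complex) \<Rightarrow> nat \<Rightarrow> 'a \<Rightarrow> complex" where
  "mat_apply n a F = (\<lambda>i x. \<Sum>j<n. a i j (F j) x)"

definition mat_norm :: "real \<Rightarrow> 'a measure \<Rightarrow> nat \<Rightarrow> (nat \<Rightarrow> nat \<Rightarrow> 'a Lp_op) \<Rightarrow> real" where
  "mat_norm p M n a =
     (SUP F \<in> {F \<in> Lp_n p M n. Lp_n_norm p M n F \<le> 1}. Lp_n_norm p M n (mat_apply n a F))"

definition map_norm :: "real \<Rightarrow> 'a measure \<Rightarrow> 'b measure \<Rightarrow> 'a Lp_op set \<Rightarrow> ('a Lp_op \<Rightarrow> 'b Lp_op) \<Rightarrow> real" where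
  "map_norm p M N A \<phi> = (SUP a \<in> {a \<in> A. op_norm p M a \<le> 1}. op_norm p N (\<phi> a))"

definition pcb_norm :: "real \<Rightarrow> 'a measure \<Rightarrow> 'b measure \<Rightarrow> 'a Lp_op set \<Rightarrow> ('a Lp_op \<Rightarrow> 'b Lp_op) \<Rightarrow> ereal" where
  "pcb_norm p M N A \<phi> =
     (SUP n \<in> {1..}. SUP a \<in> {a. (\<forall>i<n. \<forall>j<n. a i j \<in> A) \<and> mat_norm p M n a \<le> 1}.
        ereal (mat_norm p N n (\<lambda>i j. \<phi> (a i j))))"

end

theory Submission
  imports Defs
begin
lemma holder_sum:
  fixes x y :: "nat \<Rightarrow> real" and p q :: real
  assumes p: "p > 1" and q: "q > 1" and pq: "1/p + 1/q = 1"
    and x: "\<And>i. x i \<ge> 0" and y: "\<And>i. y i \<ge> 0"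
  shows "(\<Sum>i<n. x i * y i) \<le> (\<Sum>i<n. x i powr q) powr (1/q) * (\<Sum>i<n. y i powr p) powr (1/p)"
proof -
  define X where "X = (\<Sum>i<n. x i powr q)"
  define Y where "Y = (\<Sum>i<n. y i powr p)"
  have X0: "X \<ge> 0" "Y \<ge> 0" unfolding X_def Y_def by (auto intro: sum_nonneg)
  show ?thesis
  proof (cases "X = 0 \<or> Y = 0")
    case True
    then have "\<forall>i<n. x i * y i = 0"
      using q p x y by (auto simp: X_def Y_def sum_nonneg_eq_0_iff)
    then have "(\<Sum>i<n. x i * y i) = 0" by (intro sum.neutral) auto
    then show ?thesis using X0 by (simp add: X_def[symmetric] Y_def[symmetric])
  next
    case False
    then have Xp: "X > 0" "Y > 0" using X0 by auto
    define a where "a = X powr (1/q)"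
    define b where "b = Y powr (1/p)"
    have ab: "a > 0" "b > 0" using Xp by (auto simp: a_def b_def)
    have "(\<Sum>i<n. (x i / a) * (y i / b)) \<le> (\<Sum>i<n. (x i / a) powr q / q + (y i / b) powr p / p)"
      by (rule sum_mono, rule Youngs_inequality[OF q p]) (use pq x y ab in auto)
    also have "\<dots> = (\<Sum>i<n. x i powr q) / X / q + (\<Sum>i<n. y i powr p) / Y / p"
    proof -
      have "\<And>i. (x i / a) powr q = x i powr q / X"
        using ab Xp x q by (simp add: powr_divide a_def powr_powr)
      moreover have "\<And>i. (y i / b) powr p = y i powr p / Y"
        using ab Xp y p by (simp add: powr_divide b_def powr_powr)
      ultimately show ?thesis by (simp add: sum.distrib sum_divide_distrib)
    qed
    also have "\<dots> = 1" using Xp pq by (simp add: X_def[symmetric] Y_def[symmetric])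
    finally have "(\<Sum>i<n. x i * y i) / (a * b) \<le> 1"
      by (simp add: sum_divide_distrib)
    then show ?thesis using ab by (simp add: a_def b_def X_def Y_def pos_divide_le_eq)
  qed
qed

definition Qc :: "complex set" where
  "Qc = (\<lambda>(a,b). Complex (of_rat a) (of_rat b)) ` UNIV"

definition Qvec :: "nat \<Rightarrow> (nat \<Rightarrow> complex) set" where
  "Qvec n = PiE {..<n} (\<lambda>_. Qc)"

lemma countable_Qvec: "countable (Qvec n)"
  unfolding Qvec_def Qc_def by (intro countable_PiE) auto

lemma floor_approx:
  fixes x :: real
  shows "(\<lambda>k. of_int \<lfloor>x * real (Suc k)\<rfloor> / real (Suc k)) \<longlonglongrightarrow> x"
proof (rule real_tendsto_sandwich[where f="\<lambda>k. x - 1 / real (Suc k)" and h="\<lambda>k. x"])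
  show "\<forall>\<^sub>F k in sequentially. x - 1 / real (Suc k) \<le> of_int \<lfloor>x * real (Suc k)\<rfloor> / real (Suc k)"
  proof (intro always_eventually allI)
    fix k
    have "x * real (Suc k) - 1 \<le> of_int \<lfloor>x * real (Suc k)\<rfloor>" by linarith
    then have "(x * real (Suc k) - 1) / real (Suc k) \<le> of_int \<lfloor>x * real (Suc k)\<rfloor> / real (Suc k)"
      by (intro divide_right_mono) auto
    moreover have "(x * real (Suc k) - 1) / real (Suc k) = x - 1 / real (Suc k)"
      by (simp add: field_simps)
    ultimately show "x - 1 / real (Suc k) \<le> of_int \<lfloor>x * real (Suc k)\<rfloor> / real (Suc k)"
      by simp
  qed
  show "\<forall>\<^sub>F k in sequentially. of_int \<lfloor>x * real (Suc k)\<rfloor> / real (Suc k) \<le> x"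
  proof (intro always_eventually allI)
    fix k
    have "of_int \<lfloor>x * real (Suc k)\<rfloor> \<le> x * real (Suc k)" by linarith
    then have "of_int \<lfloor>x * real (Suc k)\<rfloor> / real (Suc k) \<le> x * real (Suc k) / real (Suc k)"
      by (intro divide_right_mono) auto
    then show "of_int \<lfloor>x * real (Suc k)\<rfloor> / real (Suc k) \<le> x"
      by simp
  qed
  have "(\<lambda>k. 1 / real (Suc k)) \<longlonglongrightarrow> 0" by (rule LIMSEQ_Suc[OF lim_const_over_n]) 
  then show "(\<lambda>k. x - 1 / real (Suc k)) \<longlonglongrightarrow> x"
    using tendsto_diff[OF tendsto_const, of _ 0 sequentially x] by simp
qed simp

lemma Qc_approx: "\<exists>R. (\<forall>k. R k \<in> Qc) \<and> R \<longlonglongrightarrow> z"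
proof -
  define R where "R k = Complex (of_int \<lfloor>Re z * real (Suc k)\<rfloor> / real (Suc k))
                                (of_int \<lfloor>Im z * real (Suc k)\<rfloor> / real (Suc k))" for k
  have "R k \<in> Qc" for k
  proof -
    have "R k = (\<lambda>(a,b). Complex (of_rat a) (of_rat b))
         (of_int \<lfloor>Re z * real (Suc k)\<rfloor> / of_nat (Suc k), of_int \<lfloor>Im z * real (Suc k)\<rfloor> / of_nat (Suc k))"
      by (simp add: R_def of_rat_divide of_rat_add of_rat_of_nat_eq del: of_nat_Suc)
    then show ?thesis unfolding Qc_def by blast
  qed
  moreover have "R \<longlonglongrightarrow> Complex (Re z) (Im z)"
    unfolding R_def by (intro tendsto_Complex floor_approx)
  ultimately show ?thesis by auto
qed

definition vnorm :: "real \<Rightarrow> nat \<Rightarrow> (nat \<Rightarrow> complex) \<Rightarrow> real" where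
  "vnorm r n x = (\<Sum>i<n. cmod (x i) powr r) powr (1 / r)"

lemma vnorm_nonneg: "vnorm r n x \<ge> 0" by (simp add: vnorm_def)

lemma vec_approx: "\<exists>E. (\<forall>k. E k \<in> Qvec n) \<and> (\<forall>i<n. (\<lambda>k. E k i) \<longlonglongrightarrow> \<eta> i)"
proof -
  obtain RR where RR: "\<And>z k. RR z k \<in> Qc" "\<And>z. RR z \<longlonglongrightarrow> z"
    using Qc_approx by metis
  define E where "E k = restrict (\<lambda>i. RR (\<eta> i) k) {..<n}" for k
  have "E k \<in> Qvec n" for k unfolding E_def Qvec_def using RR by auto
  moreover have "(\<lambda>k. E k i) \<longlonglongrightarrow> \<eta> i" if "i < n" for i
    using that RR(2) by (simp add: E_def)
  ultimately show ?thesis by blast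
qed

lemma vnorm_tendsto:
  assumes r: "r > 0" and E: "\<forall>i<n. (\<lambda>k. E k i) \<longlonglongrightarrow> \<eta> i"
  shows "(\<lambda>k. vnorm r n (E k)) \<longlonglongrightarrow> vnorm r n \<eta>"
  unfolding vnorm_def using r E
  by (intro tendsto_intros) (auto intro!: always_eventually sum_nonneg)

lemma pw_extend:
  fixes G :: "nat \<Rightarrow> nat \<Rightarrow> complex"
  assumes p: "p > 0" and q: "q > 0"
    and H: "\<forall>\<eta>\<in>Qvec n. \<forall>\<xi>\<in>Qvec n. cmod (\<Sum>i<n. \<Sum>j<n. \<eta> i * \<xi> j * G i j) \<le> K * vnorm q n \<eta> * vnorm p n \<xi>"
  shows "cmod (\<Sum>i<n. \<Sum>j<n. \<eta> i * \<xi> j * G i j) \<le> K * vnorm q n \<eta> * vnorm p n \<xi>"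
proof -
  obtain E where E: "\<And>k. E k \<in> Qvec n" "\<forall>i<n. (\<lambda>k. E k i) \<longlonglongrightarrow> \<eta> i"
    using vec_approx by metis
  obtain X where X: "\<And>k. X k \<in> Qvec n" "\<forall>i<n. (\<lambda>k. X k i) \<longlonglongrightarrow> \<xi> i"
    using vec_approx by metis
  have L: "(\<lambda>k. cmod (\<Sum>i<n. \<Sum>j<n. E k i * X k j * G i j)) \<longlonglongrightarrow> cmod (\<Sum>i<n. \<Sum>j<n. \<eta> i * \<xi> j * G i j)"
    using E(2) X(2) by (intro tendsto_intros) auto
  have R: "(\<lambda>k. K * vnorm q n (E k) * vnorm p n (X k)) \<longlonglongrightarrow> K * vnorm q n \<eta> * vnorm p n \<xi>"
    by (intro tendsto_intros vnorm_tendsto) (use p q E X in auto)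
  show ?thesis
    by (rule LIMSEQ_le[OF L R]) (use H E(1) X(1) in auto)
qed

lemma pw_main:
  fixes G :: "nat \<Rightarrow> nat \<Rightarrow> complex" and v :: "nat \<Rightarrow> complex"
  assumes p: "p > 1" and q: "q = p / (p - 1)" and K: "K \<ge> 0"
    and H: "\<And>\<eta> \<xi>. cmod (\<Sum>i<n. \<Sum>j<n. \<eta> i * \<xi> j * G i j) \<le> K * vnorm q n \<eta> * vnorm p n \<xi>"
  shows "(\<Sum>i<n. cmod (\<Sum>j<n. G i j * v j) powr p) \<le> K powr p * (\<Sum>j<n. cmod (v j) powr p)"
proof -
  define w where "w i = (\<Sum>j<n. G i j * v j)" for i
  define W where "W = (\<Sum>i<n. cmod (w i) powr p)"
  have W0: "W \<ge> 0" unfolding W_def by (auto intro: sum_nonneg)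
  have rhs0: "K powr p * (\<Sum>j<n. cmod (v j) powr p) \<ge> 0" by (intro mult_nonneg_nonneg sum_nonneg) auto
  show ?thesis
  proof (cases "W = 0")
    case True then show ?thesis using rhs0 by (simp add: W_def w_def)
  next
    case False
    then have Wp: "W > 0" using W0 by auto
    define \<eta> where "\<eta> i = cnj (w i) * of_real (cmod (w i) powr (p - 2))" for i
    have etaw: "\<eta> i * w i = of_real (cmod (w i) powr p)" for i
    proof (cases "w i = 0")
      case True then show ?thesis by (simp add: \<eta>_def)
    next
      case False
      have c: "cnj (w i) * w i = of_real (cmod (w i) ^ 2)"
        by (metis complex_norm_square mult.commute)
      have "\<eta> i * w i = (cnj (w i) * w i) * of_real (cmod (w i) powr (p - 2))"
        by (simp add: \<eta>_def ac_simps)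
      also have "\<dots> = of_real (cmod (w i) ^ 2 * cmod (w i) powr (p - 2))"
        unfolding c by simp
      finally have "\<eta> i * w i = of_real (cmod (w i) ^ 2 * cmod (w i) powr (p - 2))" .
      also have "cmod (w i) ^ 2 * cmod (w i) powr (p - 2) = cmod (w i) powr p"
      proof -
        have a: "cmod (w i) ^ 2 = cmod (w i) powr 2" using False by (simp add: powr_numeral)
        have b: "cmod (w i) powr (2 + (p - 2)) = cmod (w i) powr 2 * cmod (w i) powr (p - 2)"
          by (rule powr_add)
        show ?thesis using a b by simp
      qed
      finally show ?thesis .
    qed
    have "(\<Sum>i<n. \<Sum>j<n. \<eta> i * v j * G i j) = (\<Sum>i<n. \<eta> i * w i)"
      by (simp add: w_def sum_distrib_left mult.commute mult.left_commute)
    also have "\<dots> = of_real W" by (simp add: etaw W_def)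
    finally have S: "cmod (\<Sum>i<n. \<Sum>j<n. \<eta> i * v j * G i j) = W" using W0 by simp
    have pq: "(p - 1) * q = p" using p q by (simp add: field_simps)
    have etan: "cmod (\<eta> i) powr q = cmod (w i) powr p" for i
    proof (cases "w i = 0")
      case True then show ?thesis using p q by (simp add: \<eta>_def)
    next
      case False
      have "cmod (\<eta> i) = cmod (w i) * cmod (w i) powr (p - 2)" by (simp add: \<eta>_def norm_mult)
      also have "\<dots> = cmod (w i) powr (p - 1)"
      proof -
        have b: "cmod (w i) powr (1 + (p - 2)) = cmod (w i) powr 1 * cmod (w i) powr (p - 2)"
          by (rule powr_add)
        show ?thesis using b False by simp
      qed
      finally show ?thesis using pq by (simp add: powr_powr)
    qed
    have vq: "vnorm q n \<eta> = W powr (1 / q)" by (simp add: vnorm_def etan W_def)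
    define V where "V = vnorm p n v"
    have hW: "W \<le> K * W powr (1 / q) * V" using H[of \<eta> v] S vq V_def by simp
    have e: "W powr (1 / p) * W powr (1 / q) = W"
    proof -
      have q0: "q > 0" using p q by simp
      have "1 / p + 1 / q = 1" using pq p q0 by (simp add: field_simps)
      then have a: "W powr (1 / p + 1 / q) = W" using Wp by simp
      have b: "W powr (1 / p + 1 / q) = W powr (1 / p) * W powr (1 / q)" by (rule powr_add)
      show ?thesis using a b by simp
    qed
    have "W powr (1 / p) * W powr (1 / q) \<le> (K * V) * W powr (1 / q)"
      unfolding e using hW by (simp add: mult_ac)
    then have "W powr (1 / p) \<le> K * V" using Wp by simp
    then have "(W powr (1 / p)) powr p \<le> (K * V) powr p"
      using p by (intro powr_mono2) auto
    moreover have "(W powr (1 / p)) powr p = W" using p W0 by (simp add: powr_powr)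
    moreover have "(K * V) powr p = K powr p * (\<Sum>j<n. cmod (v j) powr p)"
      using K p by (simp add: V_def vnorm_def powr_mult powr_powr sum_nonneg)
    ultimately show ?thesis by (simp add: W_def w_def)
  qed
qed

lemma pw_holder:
  fixes \<eta> z :: "nat \<Rightarrow> complex"
  assumes p: "p > 1" and q: "q = p / (p - 1)"
  shows "cmod (\<Sum>i<n. \<eta> i * z i) powr p \<le> vnorm q n \<eta> powr p * (\<Sum>i<n. cmod (z i) powr p)"
proof -
  have p0: "p \<noteq> 0" "p - 1 > 0" using p by auto
  have "1 < p / (p - 1)" using p0(2) by (subst less_divide_eq_1_pos) auto
  then have q1a: "q > 1" using q by simp
  have iq: "1/q = (p - 1)/p" using q by simp
  have "1/p + (p - 1)/p = 1" using p0 by (simp add: field_simps)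
  then have q1: "q > 1" "1/p + 1/q = 1" using q1a iq by auto
  have "cmod (\<Sum>i<n. \<eta> i * z i) \<le> (\<Sum>i<n. cmod (\<eta> i) * cmod (z i))"
    by (rule order_trans[OF norm_sum]) (simp add: norm_mult)
  also have "\<dots> \<le> vnorm q n \<eta> * vnorm p n z"
    unfolding vnorm_def by (rule holder_sum[OF p q1(1)]) (use q1 in auto)
  finally have "cmod (\<Sum>i<n. \<eta> i * z i) powr p \<le> (vnorm q n \<eta> * vnorm p n z) powr p"
    using p by (intro powr_mono2) auto
  also have "\<dots> = vnorm q n \<eta> powr p * (\<Sum>i<n. cmod (z i) powr p)"
    using p by (simp add: powr_mult vnorm_nonneg vnorm_def powr_powr sum_nonneg)
  finally show ?thesis .
qed

lemma Lp_norm_nonneg: "Lp_norm p M f \<ge> 0" by (simp add: Lp_norm_def)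

lemma int_nonneg: "(\<integral>x. cmod (f x) powr p \<partial>M) \<ge> 0"
  by (intro Bochner_Integration.integral_nonneg) auto

lemma powr_le_iff_base:
  fixes x y p :: real
  assumes "p > 0" "x \<ge> 0" "y \<ge> 0"
  shows "x powr p \<le> y powr p \<longleftrightarrow> x \<le> y"
proof
  assume h: "x powr p \<le> y powr p"
  show "x \<le> y"
  proof (rule ccontr)
    assume "\<not> x \<le> y"
    then have "y powr p < x powr p" using assms by (intro powr_less_mono2) auto
    then show False using h by simp
  qed
qed (use assms in \<open>auto intro: powr_mono2\<close>)

lemma Lp_norm_powr: "p > 0 \<Longrightarrow> Lp_norm p M f powr p = (\<integral>x. cmod (f x) powr p \<partial>M)"
  using int_nonneg[where f=f and p=p and M=M] by (simp add: Lp_norm_def powr_powr)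

lemma Lp_norm_le_iff:
  assumes "p > 0" "c \<ge> 0"
  shows "Lp_norm p M f \<le> c \<longleftrightarrow> (\<integral>x. cmod (f x) powr p \<partial>M) \<le> c powr p"
proof -
  have "Lp_norm p M f \<le> c \<longleftrightarrow> Lp_norm p M f powr p \<le> c powr p"
    using assms by (simp add: Lp_norm_nonneg powr_le_iff_base)
  then show ?thesis using assms by (simp add: Lp_norm_powr)
qed

lemma Lp_zero: "(\<lambda>x. 0) \<in> Lp p M" "Lp_norm p M (\<lambda>x. 0) = 0"
  by (auto simp: Lp_def Lp_norm_def)

lemma Lp_meas: "f \<in> Lp p M \<Longrightarrow> f \<in> borel_measurable M" by (simp add: Lp_def)
lemma Lp_int: "f \<in> Lp p M \<Longrightarrow> integrable M (\<lambda>x. cmod (f x) powr p)" by (simp add: Lp_def)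

lemma Lp_scale:
  assumes f: "f \<in> Lp p M" and p: "p > 0"
  shows "(\<lambda>x. c * f x) \<in> Lp p M" "Lp_norm p M (\<lambda>x. c * f x) = cmod c * Lp_norm p M f"
proof -
  have e: "cmod (c * f x) powr p = cmod c powr p * cmod (f x) powr p" for x
    by (simp add: norm_mult powr_mult)
  show "(\<lambda>x. c * f x) \<in> Lp p M" using f Lp_int[OF f] by (auto simp: Lp_def e)
  show "Lp_norm p M (\<lambda>x. c * f x) = cmod c * Lp_norm p M f"
    using p int_nonneg[where f=f and p=p and M=M] by (simp add: Lp_norm_def e powr_mult powr_powr)
qed

lemma Lp_norm_cong_AE:
  assumes "f \<in> borel_measurable M" "g \<in> borel_measurable M" "AE x in M. f x = g x"
  shows "Lp_norm p M f = Lp_norm p M g"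
proof -
  have "(\<integral>x. cmod (f x) powr p \<partial>M) = (\<integral>x. cmod (g x) powr p \<partial>M)"
    using assms by (intro integral_cong_AE) auto
  then show ?thesis by (simp add: Lp_norm_def)
qed

lemma Lp_cong_AE:
  assumes "f \<in> Lp p M" "g \<in> borel_measurable M" "AE x in M. f x = g x"
  shows "g \<in> Lp p M"
proof -
  have "integrable M (\<lambda>x. cmod (f x) powr p) = integrable M (\<lambda>x. cmod (g x) powr p)"
    using assms Lp_meas[OF assms(1)] by (intro integrable_cong_AE) auto
  then show ?thesis using assms by (simp add: Lp_def)
qed

lemma Lp_lincomb:
  assumes p: "p > 1" and q: "q = p / (p - 1)" and u: "\<And>i. i < n \<Longrightarrow> u i \<in> Lp p M"
  shows "(\<lambda>x. \<Sum>i<n. \<eta> i * u i x) \<in> Lp p M"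
    "(\<integral>x. cmod (\<Sum>i<n. \<eta> i * u i x) powr p \<partial>M) \<le> vnorm q n \<eta> powr p * (\<Sum>i<n. \<integral>x. cmod (u i x) powr p \<partial>M)"
proof -
  have m: "(\<lambda>x. \<Sum>i<n. \<eta> i * u i x) \<in> borel_measurable M"
    using u by (intro borel_measurable_sum borel_measurable_times borel_measurable_const) (auto simp: Lp_def)
  have ib: "integrable M (\<lambda>x. vnorm q n \<eta> powr p * (\<Sum>i<n. cmod (u i x) powr p))"
  proof -
    have "integrable M (\<lambda>x. \<Sum>i<n. cmod (u i x) powr p)"
      using u by (auto intro!: Lp_int)
    then show ?thesis by simp
  qed
  have le: "cmod (\<Sum>i<n. \<eta> i * u i x) powr p \<le> vnorm q n \<eta> powr p * (\<Sum>i<n. cmod (u i x) powr p)" for x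
    by (rule pw_holder[OF p q])
  have il: "integrable M (\<lambda>x. cmod (\<Sum>i<n. \<eta> i * u i x) powr p)"
  proof (rule Bochner_Integration.integrable_bound[OF ib])
    show "(\<lambda>x. cmod (\<Sum>i<n. \<eta> i * u i x) powr p) \<in> borel_measurable M" using m by measurable
    show "AE x in M. norm (cmod (\<Sum>i<n. \<eta> i * u i x) powr p) \<le> norm (vnorm q n \<eta> powr p * (\<Sum>i<n. cmod (u i x) powr p))"
      using le by (auto intro!: always_eventually simp: sum_nonneg abs_of_nonneg)
  qed
  then show "(\<lambda>x. \<Sum>i<n. \<eta> i * u i x) \<in> Lp p M" using m by (simp add: Lp_def)
  have "(\<integral>x. cmod (\<Sum>i<n. \<eta> i * u i x) powr p \<partial>M) \<le> (\<integral>x. vnorm q n \<eta> powr p * (\<Sum>i<n. cmod (u i x) powr p) \<partial>M)"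
    by (rule Bochner_Integration.integral_mono[OF il ib le])
  also have "\<dots> = vnorm q n \<eta> powr p * (\<Sum>i<n. \<integral>x. cmod (u i x) powr p \<partial>M)"
  proof -
    have "(\<integral>x. (\<Sum>i<n. cmod (u i x) powr p) \<partial>M) = (\<Sum>i<n. \<integral>x. cmod (u i x) powr p \<partial>M)"
      by (rule Bochner_Integration.integral_sum) (use u Lp_int in auto)
    then show ?thesis by simp
  qed
  finally show "(\<integral>x. cmod (\<Sum>i<n. \<eta> i * u i x) powr p \<partial>M) \<le> vnorm q n \<eta> powr p * (\<Sum>i<n. \<integral>x. cmod (u i x) powr p \<partial>M)" .
qed

lemma Lp_sum:
  fixes u :: "nat \<Rightarrow> 'a \<Rightarrow> complex"
  assumes p: "p > 1" and u: "\<And>i. i < n \<Longrightarrow> u i \<in> Lp p M"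
  shows "(\<lambda>x. \<Sum>i<n. u i x) \<in> Lp p M"
proof -
  have "(\<lambda>x. \<Sum>i<n. 1 * u i x) \<in> Lp p M" by (rule Lp_lincomb(1)[where \<eta>="\<lambda>_. 1" and u=u and n=n and p=p and q="p/(p-1)" and M=M]) (use p u in auto)
  then show ?thesis by simp
qed

lemma mult_op_bound:
  assumes g: "g \<in> borel_measurable N" and gb: "AE y in N. cmod (g y) \<le> C"
    and f: "f \<in> Lp p N" and p: "p > 0"
  shows "(\<lambda>y. g y * f y) \<in> Lp p N" "Lp_norm p N (\<lambda>y. g y * f y) \<le> max C 0 * Lp_norm p N f"
proof -
  define C' where "C' = max C 0"
  have C': "C' \<ge> 0" by (simp add: C'_def)
  have fm: "f \<in> borel_measurable N" using f by (simp add: Lp_def)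
  have m: "(\<lambda>y. g y * f y) \<in> borel_measurable N" using g fm by measurable
  have le: "AE y in N. cmod (g y * f y) powr p \<le> C' powr p * cmod (f y) powr p"
    using gb
  proof eventually_elim
    case (elim y)
    have "cmod (g y * f y) = cmod (g y) * cmod (f y)" by (simp add: norm_mult)
    also have "\<dots> \<le> C' * cmod (f y)" using elim by (intro mult_right_mono) (auto simp: C'_def)
    finally show ?case using p by (simp add: powr_mult[symmetric] C' powr_mono2)
  qed
  have ib: "integrable N (\<lambda>y. C' powr p * cmod (f y) powr p)" using Lp_int[OF f] by simp
  have il: "integrable N (\<lambda>y. cmod (g y * f y) powr p)"
    by (rule Bochner_Integration.integrable_bound[OF ib]) (use m le in \<open>auto elim!: eventually_mono\<close>)
  then show "(\<lambda>y. g y * f y) \<in> Lp p N" using m by (simp add: Lp_def)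
  have "(\<integral>y. cmod (g y * f y) powr p \<partial>N) \<le> (\<integral>y. C' powr p * cmod (f y) powr p \<partial>N)"
    by (rule Bochner_Integration.integral_mono_AE[OF il ib le])
  also have "\<dots> = (C' * Lp_norm p N f) powr p"
    using p C' by (simp add: powr_mult Lp_norm_powr Lp_norm_nonneg)
  finally have I: "(\<integral>y. cmod (g y * f y) powr p \<partial>N) \<le> (C' * Lp_norm p N f) powr p" .
  have c0: "0 \<le> C' * Lp_norm p N f" by (rule mult_nonneg_nonneg[OF C' Lp_norm_nonneg])
  have "Lp_norm p N (\<lambda>y. g y * f y) \<le> C' * Lp_norm p N f"
    using Lp_norm_le_iff[OF p c0, where M=N and f="\<lambda>y. g y * f y"] I by simp
  then show "Lp_norm p N (\<lambda>y. g y * f y) \<le> max C 0 * Lp_norm p N f" by (simp add: C'_def)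
qed

lemma op_norm_bdd:
  assumes "\<And>f. f \<in> Lp p M \<Longrightarrow> Lp_norm p M (T f) \<le> C * Lp_norm p M f"
  shows "bdd_above ((\<lambda>f. Lp_norm p M (T f)) ` {f \<in> Lp p M. Lp_norm p M f \<le> 1})"
    "op_norm p M T \<ge> 0"
proof -
  show b: "bdd_above ((\<lambda>f. Lp_norm p M (T f)) ` {f \<in> Lp p M. Lp_norm p M f \<le> 1})"
  proof (rule bdd_aboveI2)
    fix f assume "f \<in> {f \<in> Lp p M. Lp_norm p M f \<le> 1}"
    then have "Lp_norm p M (T f) \<le> C * Lp_norm p M f" "Lp_norm p M f \<le> 1" "Lp_norm p M f \<ge> 0"
      using assms Lp_norm_nonneg by auto
    moreover have "C * Lp_norm p M f \<le> max C 0"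
    proof (cases "C \<ge> 0")
      case True
      then have "C * Lp_norm p M f \<le> C * 1" using \<open>Lp_norm p M f \<le> 1\<close> by (intro mult_left_mono) auto
      then show ?thesis by simp
    next
      case False
      then have "C * Lp_norm p M f \<le> 0" using \<open>Lp_norm p M f \<ge> 0\<close> by (intro mult_nonpos_nonneg) auto
      then show ?thesis by simp
    qed
    ultimately show "Lp_norm p M (T f) \<le> max C 0" by linarith
  qed
  have "Lp_norm p M (T (\<lambda>x. 0)) \<le> op_norm p M T"
    unfolding op_norm_def by (rule cSUP_upper[OF _ b]) (simp add: Lp_zero)
  then show "op_norm p M T \<ge> 0" using Lp_norm_nonneg order_trans by blast
qed

lemma mult_op_norm:
  assumes g: "g \<in> borel_measurable N" and gb: "AE y in N. cmod (g y) \<le> C"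
    and f: "f \<in> Lp p N" and p: "p > 0"
  shows "Lp_norm p N (\<lambda>y. g y * f y) \<le> op_norm p N (\<lambda>f y. g y * f y) * Lp_norm p N f"
proof -
  have bd: "bdd_above ((\<lambda>f. Lp_norm p N (\<lambda>y. g y * f y)) ` {f \<in> Lp p N. Lp_norm p N f \<le> 1})"
    "op_norm p N (\<lambda>f y. g y * f y) \<ge> 0"
    using op_norm_bdd[of p N "\<lambda>f y. g y * f y" "max C 0"] mult_op_bound[OF g gb _ p] by auto
  have fm: "f \<in> borel_measurable N" using f by (simp add: Lp_def)
  show ?thesis
  proof (cases "Lp_norm p N f = 0")
    case True
    then have "(\<integral>x. cmod (f x) powr p \<partial>N) = 0" using Lp_norm_powr[OF p, of N f] p by simp
    then have "AE x in N. cmod (f x) powr p = 0"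
      using integral_nonneg_eq_0_iff_AE[OF Lp_int[OF f]] by simp
    then have "AE x in N. g x * f x = 0" by eventually_elim simp
    then have "Lp_norm p N (\<lambda>y. g y * f y) = Lp_norm p N (\<lambda>y. 0)"
      using g fm by (intro Lp_norm_cong_AE) auto
    then show ?thesis using True by (simp add: Lp_zero)
  next
    case False
    define t where "t = Lp_norm p N f"
    have t: "t > 0" using False Lp_norm_nonneg[of p N f] by (simp add: t_def)
    define f' where "f' = (\<lambda>x. complex_of_real (1 / t) * f x)"
    have f': "f' \<in> Lp p N" "Lp_norm p N f' = 1" using Lp_scale[OF f p, of "of_real (1/t)"] t
      by (auto simp: f'_def t_def norm_divide)
    have A1: "Lp_norm p N (\<lambda>y. g y * f' y) \<le> op_norm p N (\<lambda>f y. g y * f y)"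
      unfolding op_norm_def using f' bd(1) by (intro cSUP_upper2[where x=f']) auto
    have A2: "(\<lambda>y. g y * f' y) = (\<lambda>y. complex_of_real (1 / t) * (g y * f y))"
      by (auto simp: f'_def)
    have A3: "Lp_norm p N (\<lambda>y. complex_of_real (1 / t) * (g y * f y)) = cmod (complex_of_real (1 / t)) * Lp_norm p N (\<lambda>y. g y * f y)"
      by (rule Lp_scale(2)[OF mult_op_bound(1)[OF g gb f p] p])
    have A4: "cmod (complex_of_real (1 / t)) = 1 / t" using t by (simp add: norm_divide)
    have B: "(1 / t) * Lp_norm p N (\<lambda>y. g y * f y) \<le> op_norm p N (\<lambda>f y. g y * f y)"
      using A1 unfolding A2 A3 A4 .
    have "Lp_norm p N (\<lambda>y. g y * f y) = t * ((1 / t) * Lp_norm p N (\<lambda>y. g y * f y))" using t by simp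
    also have "\<dots> \<le> t * op_norm p N (\<lambda>f y. g y * f y)" using B t by (intro mult_left_mono) auto
    finally show ?thesis by (simp add: t_def mult.commute)
  qed
qed

definition opsum :: "(nat \<Rightarrow> 'a Lp_op) \<Rightarrow> nat \<Rightarrow> 'a Lp_op" where
  "opsum c m = (\<lambda>f x. \<Sum>k<m. c k f x)"

lemma opsum_in:
  assumes A: "norm_closed_subalgebra p M A" and c: "\<And>k. k < m \<Longrightarrow> c k \<in> A"
  shows "opsum c m \<in> A"
  using c
proof (induction m)
  case 0 then show ?case using A by (simp add: opsum_def norm_closed_subalgebra_def)
next
  case (Suc m)
  have "opsum c (Suc m) = op_add (opsum c m) (c m)" by (simp add: opsum_def op_add_def)
  then show ?case using Suc A by (simp add: norm_closed_subalgebra_def)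
qed

lemma ae_from_norm:
  fixes h :: "'a \<Rightarrow> complex"
  assumes p: "p > 0" and c: "c \<ge> 0" and hm: "h \<in> borel_measurable N"
    and H: "\<And>f'. f' \<in> Lp p N \<Longrightarrow> (\<lambda>y. h y * f' y) \<in> Lp p N \<and> Lp_norm p N (\<lambda>y. h y * f' y) \<le> c * Lp_norm p N f'"
    and f: "f \<in> Lp p N"
  shows "AE y in N. cmod (h y * f y) \<le> c * cmod (f y)"
proof -
  have fm[measurable]: "f \<in> borel_measurable N" using f by (simp add: Lp_def)
  note hm[measurable]
  define E where "E = {y \<in> space N. c * cmod (f y) < cmod (h y * f y)}"
  have E[measurable]: "E \<in> sets N" unfolding E_def by measurable
  define fE where "fE y = complex_of_real (indicator E y) * f y" for y
  have fEm[measurable]: "fE \<in> borel_measurable N" unfolding fE_def by measurable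
  have fEp: "cmod (fE y) powr p = indicator E y * cmod (f y) powr p" for y
    by (simp add: fE_def indicator_def)
  have hfEp: "cmod (h y * fE y) powr p = indicator E y * cmod (h y * f y) powr p" for y
    by (simp add: fE_def indicator_def)
  have fEL: "fE \<in> Lp p N"
  proof -
    have "integrable N (\<lambda>y. cmod (fE y) powr p)"
      unfolding fEp using integrable_mult_indicator[OF E Lp_int[OF f]] by simp
    then show ?thesis using fEm by (simp add: Lp_def)
  qed
  from H[OF fEL] have hfL: "(\<lambda>y. h y * fE y) \<in> Lp p N" and nle: "Lp_norm p N (\<lambda>y. h y * fE y) \<le> c * Lp_norm p N fE"
    by auto
  have c0: "0 \<le> c * Lp_norm p N fE" by (rule mult_nonneg_nonneg[OF c Lp_norm_nonneg])
  have I: "(\<integral>y. cmod (h y * fE y) powr p \<partial>N) \<le> (c * Lp_norm p N fE) powr p"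
    using Lp_norm_le_iff[OF p c0, where M=N and f="\<lambda>y. h y * fE y"] nle by simp
  also have "\<dots> = c powr p * (\<integral>y. cmod (fE y) powr p \<partial>N)"
    using c p by (simp add: powr_mult Lp_norm_powr Lp_norm_nonneg)
  finally have I2: "(\<integral>y. cmod (h y * fE y) powr p \<partial>N) - c powr p * (\<integral>y. cmod (fE y) powr p \<partial>N) \<le> 0"
    by simp
  define u where "u y = cmod (h y * fE y) powr p - c powr p * cmod (fE y) powr p" for y
  have ui: "integrable N u" unfolding u_def using Lp_int[OF hfL] Lp_int[OF fEL] by auto
  have "integral\<^sup>L N u = (\<integral>y. cmod (h y * fE y) powr p \<partial>N) - c powr p * (\<integral>y. cmod (fE y) powr p \<partial>N)"
    unfolding u_def using Lp_int[OF hfL] Lp_int[OF fEL] by simp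
  then have ule: "integral\<^sup>L N u \<le> 0" using I2 by simp
  have upos: "u y > 0" if "y \<in> E" for y
  proof -
    have lt: "c * cmod (f y) < cmod (h y * f y)" using that by (simp add: E_def)
    have "(c * cmod (f y)) powr p < cmod (h y * f y) powr p"
      using lt c p by (intro powr_less_mono2) auto
    then show ?thesis using that c by (simp add: u_def fEp hfEp powr_mult)
  qed
  have unn: "u y \<ge> 0" for y
  proof (cases "y \<in> E")
    case True then show ?thesis using upos[of y] by simp
  next
    case False then show ?thesis by (simp add: u_def fEp hfEp)
  qed
  have "integral\<^sup>L N u \<ge> 0" using unn by (intro Bochner_Integration.integral_nonneg) auto
  then have "integral\<^sup>L N u = 0" using ule by simp
  then have "AE y in N. u y = 0" using integral_nonneg_eq_0_iff_AE[OF ui] unn by simp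
  then show ?thesis
    using AE_space
  proof eventually_elim
    case (elim y)
    then have "y \<notin> E" using upos[of y] by auto
    then show ?case using elim by (auto simp: E_def)
  qed
qed

locale setting =
  fixes p :: real and M :: "'a measure" and N :: "'b measure"
    and A :: "'a Lp_op set" and \<phi> :: "'a Lp_op \<Rightarrow> 'b Lp_op" and g :: "'a Lp_op \<Rightarrow> 'b \<Rightarrow> complex"
  assumes p: "1 < p"
    and A: "norm_closed_subalgebra p M A"
    and gphi: "\<And>a. a \<in> A \<Longrightarrow> \<phi> a = (\<lambda>f y. g a y * f y)"
    and gm: "\<And>a. a \<in> A \<Longrightarrow> g a \<in> borel_measurable N"
    and gb: "\<And>a. a \<in> A \<Longrightarrow> \<exists>C. AE y in N. cmod (g a y) \<le> C"
    and lin_add: "\<forall>a\<in>A. \<forall>b\<in>A. op_eq p N (\<phi> (op_add a b)) (op_add (\<phi> a) (\<phi> b))"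
    and lin_scale: "\<forall>c. \<forall>a\<in>A. op_eq p N (\<phi> (op_scale c a)) (op_scale c (\<phi> a))"
    and bnd: "\<exists>C. \<forall>a\<in>A. op_norm p N (\<phi> a) \<le> C * op_norm p M a"
begin

lemma p0: "p > 0" using p by simp

lemma A_zero: "(\<lambda>f x. 0) \<in> A" using A by (simp add: norm_closed_subalgebra_def)
lemma A_add: "S \<in> A \<Longrightarrow> T \<in> A \<Longrightarrow> op_add S T \<in> A" using A by (simp add: norm_closed_subalgebra_def)
lemma A_scale: "T \<in> A \<Longrightarrow> op_scale c T \<in> A" using A by (simp add: norm_closed_subalgebra_def)
lemma A_bounded: "T \<in> A \<Longrightarrow> is_bounded_op p M T" using A by (auto simp: norm_closed_subalgebra_def)

lemma A_Lp: "T \<in> A \<Longrightarrow> f \<in> Lp p M \<Longrightarrow> T f \<in> Lp p M"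
  using A_bounded by (simp add: is_bounded_op_def)

lemma A_hom: "T \<in> A \<Longrightarrow> f \<in> Lp p M \<Longrightarrow> AE x in M. T (\<lambda>x. c * f x) x = c * T f x"
  using A_bounded by (simp add: is_bounded_op_def ae_eq_def)

lemma A_C: "T \<in> A \<Longrightarrow> \<exists>C. \<forall>f\<in>Lp p M. Lp_norm p M (T f) \<le> C * Lp_norm p M f"
  using A_bounded by (simp add: is_bounded_op_def)

lemma A_op_norm: "T \<in> A \<Longrightarrow> bdd_above ((\<lambda>f. Lp_norm p M (T f)) ` {f \<in> Lp p M. Lp_norm p M f \<le> 1}) \<and> op_norm p M T \<ge> 0"
proof -
  assume T: "T \<in> A"
  obtain C where C: "\<forall>f\<in>Lp p M. Lp_norm p M (T f) \<le> C * Lp_norm p M f" using A_C[OF T] by blast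
  then have H: "\<And>f. f \<in> Lp p M \<Longrightarrow> Lp_norm p M (T f) \<le> C * Lp_norm p M f" by blast
  have b1: "bdd_above ((\<lambda>f. Lp_norm p M (T f)) ` {f \<in> Lp p M. Lp_norm p M f \<le> 1})"
    by (rule op_norm_bdd(1)) (rule H)
  have b2: "op_norm p M T \<ge> 0" by (rule op_norm_bdd(2)) (rule H)
  show ?thesis using b1 b2 by blast
qed

lemma phi_Lp: "a \<in> A \<Longrightarrow> f \<in> Lp p N \<Longrightarrow> \<phi> a f \<in> Lp p N"
  using gb[of a] gm[of a] gphi[of a] mult_op_bound(1)[OF _ _ _ p0] by auto

lemma phi_meas: "a \<in> A \<Longrightarrow> f \<in> Lp p N \<Longrightarrow> \<phi> a f \<in> borel_measurable N"
  using phi_Lp by (simp add: Lp_def)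

lemma phi_norm: "a \<in> A \<Longrightarrow> f \<in> Lp p N \<Longrightarrow> Lp_norm p N (\<phi> a f) \<le> op_norm p N (\<phi> a) * Lp_norm p N f"
  using gb[of a] gm[of a] gphi[of a] mult_op_norm[OF _ _ _ p0] by auto

lemma phi_op_norm: "a \<in> A \<Longrightarrow> bdd_above ((\<lambda>f. Lp_norm p N (\<phi> a f)) ` {f \<in> Lp p N. Lp_norm p N f \<le> 1}) \<and> op_norm p N (\<phi> a) \<ge> 0"
proof -
  assume a: "a \<in> A"
  obtain C where "AE y in N. cmod (g a y) \<le> C" using gb[OF a] by blast
  then have H: "\<And>f. f \<in> Lp p N \<Longrightarrow> Lp_norm p N (\<phi> a f) \<le> max C 0 * Lp_norm p N f"
    using gm[OF a] gphi[OF a] mult_op_bound(2)[OF _ _ _ p0] by auto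
  have b1: "bdd_above ((\<lambda>f. Lp_norm p N (\<phi> a f)) ` {f \<in> Lp p N. Lp_norm p N f \<le> 1})"
    by (rule op_norm_bdd(1)) (rule H)
  have b2: "op_norm p N (\<phi> a) \<ge> 0" by (rule op_norm_bdd(2)) (rule H)
  show ?thesis using b1 b2 by blast
qed

lemma phi_scale: "a \<in> A \<Longrightarrow> f \<in> Lp p N \<Longrightarrow> AE y in N. \<phi> (op_scale c a) f y = c * \<phi> a f y"
  using lin_scale by (auto simp: op_eq_def ae_eq_def op_scale_def)

lemma phi_add: "a \<in> A \<Longrightarrow> b \<in> A \<Longrightarrow> f \<in> Lp p N \<Longrightarrow> AE y in N. \<phi> (op_add a b) f y = \<phi> a f y + \<phi> b f y"
  using lin_add by (auto simp: op_eq_def ae_eq_def op_add_def)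

lemma opsum_scale_in: "(\<And>k. k < m \<Longrightarrow> c k \<in> A) \<Longrightarrow> opsum (\<lambda>k. op_scale (t k) (c k)) m \<in> A"
  by (rule opsum_in[OF A]) (auto intro: A_scale)

lemma phi_opsum:
  assumes c: "\<And>k. k < m \<Longrightarrow> c k \<in> A" and f: "f \<in> Lp p N"
  shows "AE y in N. \<phi> (opsum (\<lambda>k. op_scale (t k) (c k)) m) f y = (\<Sum>k<m. t k * g (c k) y) * f y"
  using c
proof (induction m)
  case 0
  have z: "opsum (\<lambda>k. op_scale (t k) (c k)) 0 = (\<lambda>f x. 0)" by (simp add: opsum_def)
  have z2: "op_scale 0 (\<lambda>f x. 0) = (\<lambda>f x. 0)" by (simp add: op_scale_def)
  have "AE y in N. \<phi> (op_scale 0 (\<lambda>f x. 0)) f y = 0 * \<phi> (\<lambda>f x. 0) f y"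
    by (rule phi_scale[OF A_zero f])
  then show ?case unfolding z z2 by simp
next
  case (Suc m)
  define S where "S = opsum (\<lambda>k. op_scale (t k) (c k)) m"
  have SA: "S \<in> A" unfolding S_def using Suc.prems by (intro opsum_scale_in) auto
  have cA: "c m \<in> A" using Suc.prems by auto
  have eq: "opsum (\<lambda>k. op_scale (t k) (c k)) (Suc m) = op_add S (op_scale (t m) (c m))"
    by (simp add: opsum_def op_add_def S_def)
  have IH: "AE y in N. \<phi> S f y = (\<Sum>k<m. t k * g (c k) y) * f y"
    using Suc unfolding S_def by auto
  have a1: "AE y in N. \<phi> (op_add S (op_scale (t m) (c m))) f y = \<phi> S f y + \<phi> (op_scale (t m) (c m)) f y"
    by (rule phi_add[OF SA A_scale[OF cA] f])
  have a2: "AE y in N. \<phi> (op_scale (t m) (c m)) f y = t m * \<phi> (c m) f y"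
    by (rule phi_scale[OF cA f])
  show ?case unfolding eq using a1 a2 IH
  proof eventually_elim
    case (elim y)
    then show ?case using gphi[OF cA] by (simp add: distrib_right)
  qed
qed

end

lemma Lp_n_norm_int: "p > 0 \<Longrightarrow> Lp_n_norm p M n F = (\<Sum>i<n. \<integral>x. cmod (F i x) powr p \<partial>M) powr (1 / p)"
  by (simp add: Lp_n_norm_def Lp_norm_powr)

lemma Lp_n_norm_le1:
  assumes p: "p > 0" and F: "Lp_n_norm p M n F \<le> 1"
  shows "(\<Sum>i<n. \<integral>x. cmod (F i x) powr p \<partial>M) \<le> 1"
proof -
  define S where "S = (\<Sum>i<n. \<integral>x. cmod (F i x) powr p \<partial>M)"
  have S0: "S \<ge> 0" unfolding S_def by (intro sum_nonneg int_nonneg)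
  have "S powr (1 / p) \<le> 1 powr (1 / p)" using F p by (simp add: Lp_n_norm_int S_def)
  then show ?thesis using powr_le_iff_base[of "1/p" S 1] p S0 by (simp add: S_def)
qed

context setting
begin

abbreviation K where "K \<equiv> map_norm p M N A \<phi>"

lemma map_bdd: "bdd_above ((\<lambda>a. op_norm p N (\<phi> a)) ` {a \<in> A. op_norm p M a \<le> 1})"
proof -
  obtain C where C: "\<forall>a\<in>A. op_norm p N (\<phi> a) \<le> C * op_norm p M a" using bnd by blast
  show ?thesis
  proof (rule bdd_aboveI2)
    fix a assume a: "a \<in> {a \<in> A. op_norm p M a \<le> 1}"
    then have h: "op_norm p N (\<phi> a) \<le> C * op_norm p M a" "op_norm p M a \<le> 1" "op_norm p M a \<ge> 0"
      using C A_op_norm by auto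
    moreover have "C * op_norm p M a \<le> max C 0"
    proof (cases "C \<ge> 0")
      case True
      then have "C * op_norm p M a \<le> C * 1" using h by (intro mult_left_mono) auto
      then show ?thesis by simp
    next
      case False
      then have "C * op_norm p M a \<le> 0" using h by (intro mult_nonpos_nonneg) auto
      then show ?thesis by simp
    qed
    ultimately show "op_norm p N (\<phi> a) \<le> max C 0" by linarith
  qed
qed

lemma K_upper: "a \<in> A \<Longrightarrow> op_norm p M a \<le> 1 \<Longrightarrow> op_norm p N (\<phi> a) \<le> K"
  unfolding map_norm_def by (rule cSUP_upper[OF _ map_bdd]) auto

lemma op_norm_zero: "op_norm p M (\<lambda>f x. 0) = 0"
proof -
  have ne: "{f \<in> Lp p M. Lp_norm p M f \<le> 1} \<noteq> {}" using Lp_zero[of p M] by auto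
  show ?thesis unfolding op_norm_def Lp_zero(2) by (rule cSUP_const[OF ne])
qed

lemma K_nonneg: "K \<ge> 0"
proof -
  have "op_norm p N (\<phi> (\<lambda>f x. 0)) \<le> K" using K_upper[OF A_zero] op_norm_zero by simp
  moreover have "op_norm p N (\<phi> (\<lambda>f x. 0)) \<ge> 0" using phi_op_norm[OF A_zero] by simp
  ultimately show ?thesis by simp
qed

lemma mat_Lp:
  assumes aA: "\<And>i j. i < n \<Longrightarrow> j < n \<Longrightarrow> a i j \<in> A" and F: "F \<in> Lp_n p M n" and i: "i < n"
  shows "mat_apply n a F i \<in> Lp p M"
proof -
  have "(\<lambda>x. \<Sum>j<n. a i j (F j) x) \<in> Lp p M"
    by (rule Lp_sum[OF p]) (use aA F i A_Lp in \<open>auto simp: Lp_n_def\<close>)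
  then show ?thesis by (simp add: mat_apply_def)
qed

lemma mat_bdd:
  assumes aA: "\<And>i j. i < n \<Longrightarrow> j < n \<Longrightarrow> a i j \<in> A"
  shows "bdd_above ((\<lambda>F. Lp_n_norm p M n (mat_apply n a F)) ` {F \<in> Lp_n p M n. Lp_n_norm p M n F \<le> 1})"
proof -
  have "\<forall>i j. \<exists>C. i < n \<and> j < n \<longrightarrow> (\<forall>f\<in>Lp p M. Lp_norm p M (a i j f) \<le> C * Lp_norm p M f)"
    using A_C aA by blast
  then obtain Cf where Cf: "\<And>i j f. i < n \<Longrightarrow> j < n \<Longrightarrow> f \<in> Lp p M \<Longrightarrow> Lp_norm p M (a i j f) \<le> Cf i j * Lp_norm p M f"
    by metis
  define q where "q = p / (p - 1)"
  define V where "V = vnorm q n (\<lambda>_. 1)"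
  define B where "B = (\<Sum>i<n. V powr p * (\<Sum>j<n. \<bar>Cf i j\<bar> powr p)) powr (1 / p)"
  show ?thesis
  proof (rule bdd_aboveI2)
    fix F assume "F \<in> {F \<in> Lp_n p M n. Lp_n_norm p M n F \<le> 1}"
    then have F: "F \<in> Lp_n p M n" "Lp_n_norm p M n F \<le> 1" by auto
    have Fj: "F j \<in> Lp p M" if "j < n" for j using F that by (simp add: Lp_n_def)
    have S1: "(\<Sum>j<n. \<integral>x. cmod (F j x) powr p \<partial>M) \<le> 1" by (rule Lp_n_norm_le1[OF p0 F(2)])
    have Fn: "Lp_norm p M (F j) \<le> 1" if j: "j < n" for j
    proof -
      have "(\<integral>x. cmod (F j x) powr p \<partial>M) \<le> (\<Sum>j<n. \<integral>x. cmod (F j x) powr p \<partial>M)"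
        by (rule member_le_sum) (use j int_nonneg in auto)
      then have "(\<integral>x. cmod (F j x) powr p \<partial>M) \<le> 1 powr p" using S1 by simp
      then show ?thesis using Lp_norm_le_iff[where p=p and c=1 and M=M and f="F j"] p0 by simp
    qed
    have Ui: "(\<integral>x. cmod (mat_apply n a F i x) powr p \<partial>M) \<le> V powr p * (\<Sum>j<n. \<bar>Cf i j\<bar> powr p)" if i: "i < n" for i
    proof -
      have ujL: "a i j (F j) \<in> Lp p M" if "j < n" for j using A_Lp aA i that Fj by auto
      have "(\<integral>x. cmod (\<Sum>j<n. 1 * a i j (F j) x) powr p \<partial>M) \<le> V powr p * (\<Sum>j<n. \<integral>x. cmod (a i j (F j) x) powr p \<partial>M)"
        unfolding V_def by (rule Lp_lincomb(2)[OF p q_def]) (rule ujL)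
      also have "\<dots> \<le> V powr p * (\<Sum>j<n. \<bar>Cf i j\<bar> powr p)"
      proof (intro mult_left_mono sum_mono)
        fix j assume j: "j \<in> {..<n}"
        have "Lp_norm p M (a i j (F j)) \<le> Cf i j * Lp_norm p M (F j)" using Cf i j Fj by auto
        also have "\<dots> \<le> \<bar>Cf i j\<bar>"
        proof -
          have "Cf i j * Lp_norm p M (F j) \<le> \<bar>Cf i j\<bar> * Lp_norm p M (F j)"
            by (intro mult_right_mono) (auto simp: Lp_norm_nonneg)
          also have "\<dots> \<le> \<bar>Cf i j\<bar> * 1" using Fn j by (intro mult_left_mono) auto
          finally show ?thesis by simp
        qed
        finally show "(\<integral>x. cmod (a i j (F j) x) powr p \<partial>M) \<le> \<bar>Cf i j\<bar> powr p"
          using Lp_norm_le_iff[where p=p and c="\<bar>Cf i j\<bar>" and M=M and f="a i j (F j)"] p0 by simp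
      qed simp
      finally show ?thesis by (simp add: mat_apply_def)
    qed
    have "Lp_n_norm p M n (mat_apply n a F) = (\<Sum>i<n. \<integral>x. cmod (mat_apply n a F i x) powr p \<partial>M) powr (1 / p)"
      by (rule Lp_n_norm_int[OF p0])
    also have "\<dots> \<le> B" unfolding B_def
      using p by (intro powr_mono2 sum_mono sum_nonneg int_nonneg Ui) auto
    finally show "Lp_n_norm p M n (mat_apply n a F) \<le> B" .
  qed
qed

end

lemma vnorm_zero:
  assumes "vnorm r n x = 0" "r > 0" "i < n"
  shows "x i = 0"
proof -
  have "(\<Sum>i<n. cmod (x i) powr r) = 0" using assms(1) by (simp add: vnorm_def)
  then have "\<forall>i\<in>{..<n}. cmod (x i) powr r = 0" by (subst sum_nonneg_eq_0_iff[symmetric]) auto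
  then show ?thesis using assms(3) by auto
qed

context setting
begin

lemma b_bound:
  assumes aA: "\<And>i j. i < n \<Longrightarrow> j < n \<Longrightarrow> a i j \<in> A" and mn: "mat_norm p M n a \<le> 1"
    and r: "vnorm p n \<xi> > 0" and f: "f \<in> Lp p M" and f1: "Lp_norm p M f \<le> 1"
  shows "Lp_norm p M (\<lambda>x. \<Sum>i<n. \<eta> i * (\<Sum>j<n. \<xi> j * a i j f x)) \<le> vnorm (p / (p - 1)) n \<eta> * vnorm p n \<xi>"
proof -
  define q where "q = p / (p - 1)"
  define r where "r = vnorm p n \<xi>"
  have r0: "r > 0" using r by (simp add: r_def)
  define c where "c j = \<xi> j / complex_of_real r" for j
  define F' where "F' j = (\<lambda>x. c j * f x)" for j
  have F'L: "F' \<in> Lp_n p M n" using Lp_scale(1)[OF f p0] by (simp add: Lp_n_def F'_def)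
  have rS: "r powr p = (\<Sum>j<n. cmod (\<xi> j) powr p)"
    using p by (simp add: r_def vnorm_def powr_powr sum_nonneg)
  have e1: "Lp_norm p M (F' j) powr p = Lp_norm p M f powr p * (cmod (\<xi> j) powr p / r powr p)" for j
  proof -
    have "Lp_norm p M (F' j) = cmod (c j) * Lp_norm p M f" unfolding F'_def by (rule Lp_scale(2)[OF f p0])
    moreover have "cmod (c j) = cmod (\<xi> j) / r" using r0 by (simp add: c_def norm_divide)
    ultimately show ?thesis using r0 by (simp add: powr_mult powr_divide Lp_norm_nonneg)
  qed
  have "(\<Sum>j<n. Lp_norm p M (F' j) powr p) = Lp_norm p M f powr p * ((\<Sum>j<n. cmod (\<xi> j) powr p) / r powr p)"
    by (simp add: e1 sum_distrib_left sum_divide_distrib)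
  also have "\<dots> = Lp_norm p M f powr p" unfolding rS[symmetric] using r0 by simp
  finally have "Lp_n_norm p M n F' = (Lp_norm p M f powr p) powr (1 / p)" by (simp add: Lp_n_norm_def)
  also have "\<dots> = Lp_norm p M f" using p by (simp add: powr_powr Lp_norm_nonneg)
  finally have normF': "Lp_n_norm p M n F' \<le> 1" using f1 by simp
  define U where "U = mat_apply n a F'"
  have UL: "U i \<in> Lp p M" if "i < n" for i unfolding U_def by (rule mat_Lp[OF aA F'L that])
  have "Lp_n_norm p M n U \<le> mat_norm p M n a"
    unfolding mat_norm_def U_def by (rule cSUP_upper[OF _ mat_bdd[OF aA]]) (use F'L normF' in auto)
  then have Un: "Lp_n_norm p M n U \<le> 1" using mn by simp
  have hom: "\<forall>ij\<in>{..<n}\<times>{..<n}. AE x in M. a (fst ij) (snd ij) (F' (snd ij)) x = c (snd ij) * a (fst ij) (snd ij) f x"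
    using A_hom aA f by (auto simp: F'_def)
  have hom2: "AE x in M. \<forall>ij\<in>{..<n}\<times>{..<n}. a (fst ij) (snd ij) (F' (snd ij)) x = c (snd ij) * a (fst ij) (snd ij) f x"
    by (rule eventually_ball_finite) (use hom in auto)
  have ae: "AE x in M. (\<Sum>i<n. \<eta> i * (\<Sum>j<n. \<xi> j * a i j f x)) = complex_of_real r * (\<Sum>i<n. \<eta> i * U i x)"
    using hom2
  proof eventually_elim
    case (elim x)
    have Ux: "U i x = (\<Sum>j<n. c j * a i j f x)" if "i < n" for i
      using elim that by (auto simp: U_def mat_apply_def intro!: sum.cong)
    have "\<xi> j = complex_of_real r * c j" for j using r0 by (simp add: c_def)
    then have "(\<Sum>j<n. \<xi> j * a i j f x) = complex_of_real r * (\<Sum>j<n. c j * a i j f x)" for i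
      by (simp add: sum_distrib_left mult.assoc)
    then have "(\<Sum>i<n. \<eta> i * (\<Sum>j<n. \<xi> j * a i j f x)) = (\<Sum>i<n. complex_of_real r * (\<eta> i * U i x))"
      using Ux by (auto simp: mult_ac intro!: sum.cong)
    then show ?case by (simp add: sum_distrib_left)
  qed
  have lcL: "(\<lambda>x. \<Sum>i<n. \<eta> i * U i x) \<in> Lp p M" by (rule Lp_lincomb(1)[OF p q_def UL])
  have m1: "(\<lambda>x. \<Sum>i<n. \<eta> i * (\<Sum>j<n. \<xi> j * a i j f x)) \<in> borel_measurable M"
  proof -
    have "a i j f \<in> borel_measurable M" if "i < n" "j < n" for i j
      using A_Lp[OF aA[OF that] f] by (simp add: Lp_def)
    then show ?thesis
      by (intro borel_measurable_sum borel_measurable_times borel_measurable_const) auto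
  qed
  have m2: "(\<lambda>x. complex_of_real r * (\<Sum>i<n. \<eta> i * U i x)) \<in> borel_measurable M"
    using Lp_scale(1)[OF lcL p0] by (simp add: Lp_def)
  have "Lp_norm p M (\<lambda>x. \<Sum>i<n. \<eta> i * (\<Sum>j<n. \<xi> j * a i j f x)) = Lp_norm p M (\<lambda>x. complex_of_real r * (\<Sum>i<n. \<eta> i * U i x))"
    by (rule Lp_norm_cong_AE[OF m1 m2 ae])
  also have "\<dots> = r * Lp_norm p M (\<lambda>x. \<Sum>i<n. \<eta> i * U i x)"
    using Lp_scale(2)[OF lcL p0] r0 by simp
  also have "Lp_norm p M (\<lambda>x. \<Sum>i<n. \<eta> i * U i x) \<le> vnorm q n \<eta>"
  proof -
    have "(\<integral>x. cmod (\<Sum>i<n. \<eta> i * U i x) powr p \<partial>M) \<le> vnorm q n \<eta> powr p * (\<Sum>i<n. \<integral>x. cmod (U i x) powr p \<partial>M)"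
      by (rule Lp_lincomb(2)[OF p q_def UL])
    also have "\<dots> \<le> vnorm q n \<eta> powr p * 1"
      by (intro mult_left_mono Lp_n_norm_le1[OF p0 Un]) auto
    finally show ?thesis using Lp_norm_le_iff[where p=p and c="vnorm q n \<eta>" and M=M and f="\<lambda>x. \<Sum>i<n. \<eta> i * U i x"] p0 vnorm_nonneg
      by simp
  qed
  then have "r * Lp_norm p M (\<lambda>x. \<Sum>i<n. \<eta> i * U i x) \<le> r * vnorm q n \<eta>" using r0 by simp
  finally show ?thesis by (simp add: q_def r_def mult.commute)
qed

end

context setting
begin

lemma pair_ae:
  assumes aA: "\<And>i j. i < n \<Longrightarrow> j < n \<Longrightarrow> a i j \<in> A" and mn: "mat_norm p M n a \<le> 1"
    and F: "\<And>j. j < n \<Longrightarrow> F j \<in> Lp p N"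
  shows "AE y in N. \<forall>j<n. cmod ((\<Sum>i<n. \<Sum>j'<n. \<eta> i * \<xi> j' * g (a i j') y) * F j y)
            \<le> K * vnorm (p / (p - 1)) n \<eta> * vnorm p n \<xi> * cmod (F j y)"
proof -
  define q where "q = p / (p - 1)"
  have q0: "q > 0" using p by (simp add: q_def)
  define h where "h y = (\<Sum>i<n. \<Sum>j'<n. \<eta> i * \<xi> j' * g (a i j') y)" for y
  show ?thesis
  proof (cases "vnorm q n \<eta> = 0 \<or> vnorm p n \<xi> = 0")
    case True
    have "h y = 0" for y
    proof (cases "vnorm q n \<eta> = 0")
      case True
      then have "\<eta> i = 0" if "i < n" for i using vnorm_zero q0 that by blast
      then show ?thesis by (simp add: h_def)
    next
      case False
      then have "vnorm p n \<xi> = 0" using True by simp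
      then have "\<xi> i = 0" if "i < n" for i using vnorm_zero p0 that by blast
      then show ?thesis by (simp add: h_def)
    qed
    moreover have "AE y in N. \<forall>j<n. 0 \<le> K * vnorm q n \<eta> * vnorm p n \<xi> * cmod (F j y)"
      using K_nonneg by (intro always_eventually allI impI mult_nonneg_nonneg) (auto simp: vnorm_nonneg)
    ultimately show ?thesis by (simp add: h_def[symmetric] q_def[symmetric])
  next
    case False
    define s where "s = vnorm q n \<eta> * vnorm p n \<xi>"
    have s0: "s > 0" using False vnorm_nonneg[of q n \<eta>] vnorm_nonneg[of p n \<xi>] by (simp add: s_def)
    have np: "vnorm p n \<xi> > 0" using False vnorm_nonneg[of p n \<xi>] by simp
    define R where "R i = opsum (\<lambda>j. op_scale (\<xi> j) (a i j)) n" for i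
    have RA: "R i \<in> A" if "i < n" for i unfolding R_def by (rule opsum_scale_in) (use aA that in auto)
    define b where "b = opsum (\<lambda>i. op_scale (\<eta> i) (R i)) n"
    have bA: "b \<in> A" unfolding b_def by (rule opsum_scale_in) (use RA in auto)
    have bf: "b f = (\<lambda>x. \<Sum>i<n. \<eta> i * (\<Sum>j<n. \<xi> j * a i j f x))" for f
      by (simp add: b_def R_def opsum_def op_scale_def)
    define b' where "b' = op_scale (complex_of_real (1 / s)) b"
    have b'A: "b' \<in> A" unfolding b'_def by (rule A_scale[OF bA])
    have b'n: "op_norm p M b' \<le> 1"
      unfolding op_norm_def
    proof (rule cSUP_least)
      show "{f \<in> Lp p M. Lp_norm p M f \<le> 1} \<noteq> {}" using Lp_zero[of p M] by auto
    next
      fix f assume "f \<in> {f \<in> Lp p M. Lp_norm p M f \<le> 1}"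
      then have f: "f \<in> Lp p M" "Lp_norm p M f \<le> 1" by auto
      have "Lp_norm p M (b' f) = Lp_norm p M (\<lambda>x. complex_of_real (1 / s) * b f x)"
        by (simp add: b'_def op_scale_def)
      also have "\<dots> = (1 / s) * Lp_norm p M (b f)"
        using Lp_scale(2)[OF A_Lp[OF bA f(1)] p0, of "complex_of_real (1 / s)"] s0 by (simp add: norm_divide)
      also have "Lp_norm p M (b f) \<le> s"
        unfolding bf s_def q_def by (rule b_bound[OF aA mn np f])
      then have "(1 / s) * Lp_norm p M (b f) \<le> (1 / s) * s" using s0 by (intro mult_left_mono) auto
      finally show "Lp_norm p M (b' f) \<le> 1" using s0 by simp
    qed
    have Kb: "op_norm p N (\<phi> b') \<le> K" by (rule K_upper[OF b'A b'n])
    have hm: "h \<in> borel_measurable N"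
      unfolding h_def using gm aA
      by (intro borel_measurable_sum borel_measurable_times borel_measurable_const) auto
    have H: "(\<lambda>y. h y * f' y) \<in> Lp p N \<and> Lp_norm p N (\<lambda>y. h y * f' y) \<le> (K * s) * Lp_norm p N f'"
      if f': "f' \<in> Lp p N" for f'
    proof -
      have a1: "AE y in N. \<phi> b' f' y = complex_of_real (1 / s) * \<phi> b f' y"
        unfolding b'_def by (rule phi_scale[OF bA f'])
      have a2: "AE y in N. \<phi> b f' y = (\<Sum>i<n. \<eta> i * g (R i) y) * f' y"
        unfolding b_def by (rule phi_opsum[OF RA f'])
      have a3: "AE y in N. \<forall>i\<in>{..<n}. \<phi> (R i) f' y = (\<Sum>j<n. \<xi> j * g (a i j) y) * f' y"
        by (rule eventually_ball_finite) (auto simp: R_def intro!: phi_opsum aA f')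
      have ae: "AE y in N. h y * f' y = complex_of_real s * \<phi> b' f' y"
        using a1 a2 a3
      proof eventually_elim
        case (elim y)
        have gR: "g (R i) y * f' y = (\<Sum>j<n. \<xi> j * g (a i j) y) * f' y" if "i < n" for i
        proof -
          have e: "\<phi> (R i) f' y = (\<Sum>j<n. \<xi> j * g (a i j) y) * f' y" using elim(3) that by blast
          show ?thesis using e unfolding gphi[OF RA[OF that]] .
        qed
        have "h y * f' y = (\<Sum>i<n. \<eta> i * ((\<Sum>j<n. \<xi> j * g (a i j) y) * f' y))"
          by (simp add: h_def sum_distrib_left sum_distrib_right mult_ac)
        also have "\<dots> = (\<Sum>i<n. \<eta> i * (g (R i) y * f' y))"
          by (intro sum.cong refl) (simp add: gR)
        also have "\<dots> = \<phi> b f' y" using elim(2) by (simp add: sum_distrib_left sum_distrib_right mult_ac)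
        also have "\<dots> = complex_of_real s * \<phi> b' f' y" using elim(1) s0 by simp
        finally show ?case .
      qed
      have L1: "(\<lambda>y. complex_of_real s * \<phi> b' f' y) \<in> Lp p N"
        by (rule Lp_scale(1)[OF phi_Lp[OF b'A f'] p0])
      have fm: "f' \<in> borel_measurable N" using f' by (simp add: Lp_def)
      have m1: "(\<lambda>y. h y * f' y) \<in> borel_measurable N" using hm fm by measurable
      have m2: "(\<lambda>y. complex_of_real s * \<phi> b' f' y) \<in> borel_measurable N" using L1 by (simp add: Lp_def)
      have L2: "(\<lambda>y. h y * f' y) \<in> Lp p N"
        by (rule Lp_cong_AE[OF L1 m1]) (use ae in \<open>auto elim!: eventually_mono\<close>)
      have "Lp_norm p N (\<lambda>y. h y * f' y) = Lp_norm p N (\<lambda>y. complex_of_real s * \<phi> b' f' y)"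
        by (rule Lp_norm_cong_AE[OF m1 m2 ae])
      also have "\<dots> = s * Lp_norm p N (\<phi> b' f')"
        using Lp_scale(2)[OF phi_Lp[OF b'A f'] p0, of "complex_of_real s"] s0 by simp
      also have "\<dots> \<le> s * (op_norm p N (\<phi> b') * Lp_norm p N f')"
        using phi_norm[OF b'A f'] s0 by (intro mult_left_mono) auto
      also have "\<dots> \<le> s * (K * Lp_norm p N f')"
        using Kb s0 Lp_norm_nonneg by (intro mult_left_mono mult_right_mono) auto
      finally show ?thesis using L2 by (simp add: mult_ac)
    qed
    have Ks: "K * s \<ge> 0" using K_nonneg s0 by simp
    have each: "\<forall>j\<in>{..<n}. AE y in N. cmod (h y * F j y) \<le> (K * s) * cmod (F j y)"
      using ae_from_norm[OF p0 Ks hm H] F by auto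
    have "AE y in N. \<forall>j\<in>{..<n}. cmod (h y * F j y) \<le> (K * s) * cmod (F j y)"
      by (rule eventually_ball_finite) (use each in auto)
    then show ?thesis
      by (auto simp: h_def s_def q_def mult_ac elim!: eventually_mono)
  qed
qed

end

lemma mat_norm_1:
  assumes p: "p > 0"
  shows "mat_norm p X 1 (\<lambda>i j. T) = op_norm p X T"
proof -
  have e2: "Lp_n_norm p X 1 F = Lp_norm p X (F 0)" for F
    using p by (simp add: Lp_n_norm_def powr_powr Lp_norm_nonneg)
  have e1: "Lp_n_norm p X 1 (mat_apply 1 (\<lambda>i j. T) F) = Lp_norm p X (T (F 0))" for F
  proof -
    have m: "mat_apply 1 (\<lambda>i j. T) F = (\<lambda>i. T (F 0))" by (simp add: mat_apply_def)
    show ?thesis unfolding m using e2[of "\<lambda>i. T (F 0)"] by simp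
  qed
  have e3: "F \<in> Lp_n p X 1 \<longleftrightarrow> F 0 \<in> Lp p X" for F
    by (simp add: Lp_n_def)
  have "(\<lambda>F. Lp_n_norm p X 1 (mat_apply 1 (\<lambda>i j. T) F)) ` {F \<in> Lp_n p X 1. Lp_n_norm p X 1 F \<le> 1}
      = (\<lambda>f. Lp_norm p X (T f)) ` {f \<in> Lp p X. Lp_norm p X f \<le> 1}"
  proof
    show "(\<lambda>F. Lp_n_norm p X 1 (mat_apply 1 (\<lambda>i j. T) F)) ` {F \<in> Lp_n p X 1. Lp_n_norm p X 1 F \<le> 1}
      \<subseteq> (\<lambda>f. Lp_norm p X (T f)) ` {f \<in> Lp p X. Lp_norm p X f \<le> 1}"
    proof
      fix v assume "v \<in> (\<lambda>F. Lp_n_norm p X 1 (mat_apply 1 (\<lambda>i j. T) F)) ` {F \<in> Lp_n p X 1. Lp_n_norm p X 1 F \<le> 1}"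
      then obtain F where F: "F \<in> Lp_n p X 1" "Lp_n_norm p X 1 F \<le> 1" "v = Lp_n_norm p X 1 (mat_apply 1 (\<lambda>i j. T) F)"
        by blast
      then have "F 0 \<in> {f \<in> Lp p X. Lp_norm p X f \<le> 1}" "v = Lp_norm p X (T (F 0))"
        unfolding e1 unfolding e2 e3 by auto
      then show "v \<in> (\<lambda>f. Lp_norm p X (T f)) ` {f \<in> Lp p X. Lp_norm p X f \<le> 1}" by blast
    qed
  next
    show "(\<lambda>f. Lp_norm p X (T f)) ` {f \<in> Lp p X. Lp_norm p X f \<le> 1}
      \<subseteq> (\<lambda>F. Lp_n_norm p X 1 (mat_apply 1 (\<lambda>i j. T) F)) ` {F \<in> Lp_n p X 1. Lp_n_norm p X 1 F \<le> 1}"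
    proof
      fix v assume "v \<in> (\<lambda>f. Lp_norm p X (T f)) ` {f \<in> Lp p X. Lp_norm p X f \<le> 1}"
      then obtain f where f: "f \<in> Lp p X" "Lp_norm p X f \<le> 1" "v = Lp_norm p X (T f)" by blast
      then have "(\<lambda>i. f) \<in> {F \<in> Lp_n p X 1. Lp_n_norm p X 1 F \<le> 1}"
        "v = Lp_n_norm p X 1 (mat_apply 1 (\<lambda>i j. T) (\<lambda>i. f))"
        unfolding e1 unfolding e2 e3 by auto
      then show "v \<in> (\<lambda>F. Lp_n_norm p X 1 (mat_apply 1 (\<lambda>i j. T) F)) ` {F \<in> Lp_n p X 1. Lp_n_norm p X 1 F \<le> 1}"
        by blast
    qed
  qed
  then show ?thesis unfolding mat_norm_def op_norm_def by simp
qed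

context setting
begin

lemma main_upper:
  assumes aA: "\<And>i j. i < n \<Longrightarrow> j < n \<Longrightarrow> a i j \<in> A" and mn: "mat_norm p M n a \<le> 1"
  shows "mat_norm p N n (\<lambda>i j. \<phi> (a i j)) \<le> K"
  unfolding mat_norm_def
proof (rule cSUP_least)
  have "(\<lambda>i x. 0) \<in> {F \<in> Lp_n p N n. Lp_n_norm p N n F \<le> 1}"
    using p by (simp add: Lp_n_def Lp_n_norm_def Lp_zero)
  then show "{F \<in> Lp_n p N n. Lp_n_norm p N n F \<le> 1} \<noteq> {}" by blast
next
  fix F assume "F \<in> {F \<in> Lp_n p N n. Lp_n_norm p N n F \<le> 1}"
  then have F: "F \<in> Lp_n p N n" "Lp_n_norm p N n F \<le> 1" by auto
  have Fj: "F j \<in> Lp p N" if "j < n" for j using F that by (simp add: Lp_n_def)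
  define q where "q = p / (p - 1)"
  have q0: "q > 0" using p by (simp add: q_def)
  define D where "D = Qvec n \<times> Qvec n"
  have cD: "countable D" unfolding D_def by (intro countable_SIGMA countable_Qvec)
  have AE1: "AE y in N. \<forall>ex\<in>D. \<forall>j<n. cmod ((\<Sum>i<n. \<Sum>j'<n. fst ex i * snd ex j' * g (a i j') y) * F j y)
            \<le> K * vnorm q n (fst ex) * vnorm p n (snd ex) * cmod (F j y)"
    unfolding AE_ball_countable[OF cD] using pair_ae[OF aA mn Fj] by (auto simp: q_def)
  define W where "W i y = (\<Sum>j<n. g (a i j) y * F j y)" for i y
  have pw: "AE y in N. (\<Sum>i<n. cmod (W i y) powr p) \<le> K powr p * (\<Sum>j<n. cmod (F j y) powr p)"
    using AE1
  proof eventually_elim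
    case (elim y)
    show ?case
    proof (cases "\<forall>j<n. F j y = 0")
      case True
      then have "W i y = 0" for i by (simp add: W_def)
      then show ?thesis by (simp add: sum_nonneg)
    next
      case False
      then obtain j0 where j0: "j0 < n" "F j0 y \<noteq> 0" by blast
      have Hq: "\<forall>\<eta>\<in>Qvec n. \<forall>\<xi>\<in>Qvec n. cmod (\<Sum>i<n. \<Sum>j<n. \<eta> i * \<xi> j * g (a i j) y) \<le> K * vnorm q n \<eta> * vnorm p n \<xi>"
      proof (intro ballI)
        fix \<eta> \<xi> assume "\<eta> \<in> Qvec n" "\<xi> \<in> Qvec n"
        then have "(\<eta>, \<xi>) \<in> D" by (simp add: D_def)
        then have "cmod ((\<Sum>i<n. \<Sum>j'<n. \<eta> i * \<xi> j' * g (a i j') y) * F j0 y) \<le> K * vnorm q n \<eta> * vnorm p n \<xi> * cmod (F j0 y)"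
          using elim j0 by fastforce
        then have "cmod (\<Sum>i<n. \<Sum>j'<n. \<eta> i * \<xi> j' * g (a i j') y) * cmod (F j0 y) \<le> (K * vnorm q n \<eta> * vnorm p n \<xi>) * cmod (F j0 y)"
          by (simp add: norm_mult)
        then show "cmod (\<Sum>i<n. \<Sum>j<n. \<eta> i * \<xi> j * g (a i j) y) \<le> K * vnorm q n \<eta> * vnorm p n \<xi>"
          using j0 by (simp add: mult_le_cancel_right)
      qed
      have Hall: "cmod (\<Sum>i<n. \<Sum>j<n. \<eta> i * \<xi> j * g (a i j) y) \<le> K * vnorm q n \<eta> * vnorm p n \<xi>" for \<eta> \<xi>
        by (rule pw_extend[OF p0 q0 Hq])
      show ?thesis unfolding W_def by (rule pw_main[OF p q_def K_nonneg Hall])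
    qed
  qed
  have Wm: "W i \<in> borel_measurable N" if "i < n" for i
  proof -
    have "(\<lambda>y. g (a i j) y * F j y) \<in> borel_measurable N" if "j < n" for j
      using gm[OF aA[OF \<open>i < n\<close> that]] Fj[OF that] by (auto simp: Lp_def intro!: borel_measurable_times)
    then show ?thesis unfolding W_def by (intro borel_measurable_sum) auto
  qed
  define RHS where "RHS y = K powr p * (\<Sum>j<n. cmod (F j y) powr p)" for y
  have RHSi: "integrable N RHS"
  proof -
    have "integrable N (\<lambda>y. \<Sum>j<n. cmod (F j y) powr p)" using Fj by (auto intro!: Lp_int)
    then show ?thesis unfolding RHS_def by simp
  qed
  have Wi: "integrable N (\<lambda>y. cmod (W i y) powr p)" if i: "i < n" for i
  proof (rule Bochner_Integration.integrable_bound[OF RHSi])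
    show "(\<lambda>y. cmod (W i y) powr p) \<in> borel_measurable N" using Wm[OF i] by measurable
    show "AE y in N. norm (cmod (W i y) powr p) \<le> norm (RHS y)"
      using pw
    proof eventually_elim
      case (elim y)
      have "cmod (W i y) powr p \<le> (\<Sum>i<n. cmod (W i y) powr p)"
        by (rule member_le_sum) (use i in auto)
      moreover have "RHS y \<ge> 0" unfolding RHS_def by (intro mult_nonneg_nonneg sum_nonneg) auto
      ultimately show ?case using elim by (simp add: RHS_def)
    qed
  qed
  have "(\<Sum>i<n. \<integral>y. cmod (W i y) powr p \<partial>N) = (\<integral>y. (\<Sum>i<n. cmod (W i y) powr p) \<partial>N)"
    by (rule Bochner_Integration.integral_sum[symmetric]) (use Wi in auto)
  also have "\<dots> \<le> integral\<^sup>L N RHS"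
    by (rule Bochner_Integration.integral_mono_AE) (use Wi RHSi pw in \<open>auto simp: RHS_def\<close>)
  also have "\<dots> = K powr p * (\<Sum>j<n. \<integral>y. cmod (F j y) powr p \<partial>N)"
  proof -
    have "(\<integral>y. (\<Sum>j<n. cmod (F j y) powr p) \<partial>N) = (\<Sum>j<n. \<integral>y. cmod (F j y) powr p \<partial>N)"
      by (rule Bochner_Integration.integral_sum) (use Fj Lp_int in auto)
    then show ?thesis unfolding RHS_def by simp
  qed
  also have "\<dots> \<le> K powr p * 1"
    by (intro mult_left_mono Lp_n_norm_le1[OF p0 F(2)]) auto
  finally have S: "(\<Sum>i<n. \<integral>y. cmod (W i y) powr p \<partial>N) \<le> K powr p" by simp
  have mW: "mat_apply n (\<lambda>i j. \<phi> (a i j)) F i = W i" if "i < n" for i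
    using that aA by (auto simp: mat_apply_def W_def gphi intro!: sum.cong)
  have "Lp_n_norm p N n (mat_apply n (\<lambda>i j. \<phi> (a i j)) F) = (\<Sum>i<n. \<integral>y. cmod (W i y) powr p \<partial>N) powr (1 / p)"
    unfolding Lp_n_norm_int[OF p0] using mW by (auto intro!: sum.cong arg_cong[where f="\<lambda>x. x powr (1/p)"])
  also have "\<dots> \<le> (K powr p) powr (1 / p)"
    using S p by (intro powr_mono2 sum_nonneg int_nonneg) auto
  also have "\<dots> = K" using K_nonneg p by (simp add: powr_powr)
  finally show "Lp_n_norm p N n (mat_apply n (\<lambda>i j. \<phi> (a i j)) F) \<le> K" .
qed

end

theorem mainTheorem12:
  fixes p :: real and M :: "'a measure" and N :: "'b measure"
    and A :: "'a Lp_op set" and \<phi> :: "'a Lp_op \<Rightarrow> 'b Lp_op"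
  assumes "1 < p"
    and "norm_closed_subalgebra p M A"
    and "\<forall>a\<in>A. \<phi> a \<in> Linf_mult_ops N"
    and "\<forall>a\<in>A. \<forall>b\<in>A. op_eq p N (\<phi> (op_add a b)) (op_add (\<phi> a) (\<phi> b))"
    and "\<forall>c. \<forall>a\<in>A. op_eq p N (\<phi> (op_scale c a)) (op_scale c (\<phi> a))"
    and "\<exists>C. \<forall>a\<in>A. op_norm p N (\<phi> a) \<le> C * op_norm p M a"
  shows "pcb_norm p M N A \<phi> = ereal (map_norm p M N A \<phi>)"
proof -
  have "\<forall>a\<in>A. \<exists>g. g \<in> borel_measurable N \<and> (\<exists>C. AE y in N. cmod (g y) \<le> C) \<and> \<phi> a = (\<lambda>f y. g y * f y)"
    using assms(3) by (simp add: Linf_mult_ops_def)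
  then obtain G where G: "\<forall>a\<in>A. G a \<in> borel_measurable N \<and> (\<exists>C. AE y in N. cmod (G a y) \<le> C) \<and> \<phi> a = (\<lambda>f y. G a y * f y)"
    by (rule bchoice[elim_format]) blast
  interpret S: setting p M N A \<phi> G
    by unfold_locales (use assms G in auto)
  have up: "pcb_norm p M N A \<phi> \<le> ereal (map_norm p M N A \<phi>)"
    unfolding pcb_norm_def
  proof (intro SUP_least)
    fix n a assume "a \<in> {a. (\<forall>i<n. \<forall>j<n. a i j \<in> A) \<and> mat_norm p M n a \<le> 1}"
    then have "mat_norm p N n (\<lambda>i j. \<phi> (a i j)) \<le> map_norm p M N A \<phi>"
      by (intro S.main_upper) auto
    then show "ereal (mat_norm p N n (\<lambda>i j. \<phi> (a i j))) \<le> ereal (map_norm p M N A \<phi>)" by simp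
  qed
  have low: "ereal (op_norm p N (\<phi> a)) \<le> pcb_norm p M N A \<phi>" if a: "a \<in> A" "op_norm p M a \<le> 1" for a
  proof -
    have "ereal (op_norm p N (\<phi> a)) = ereal (mat_norm p N 1 (\<lambda>i j. \<phi> a))"
      by (rule arg_cong[where f=ereal], rule mat_norm_1[OF S.p0, symmetric])
    also have "\<dots> \<le> (SUP a\<in>{a. (\<forall>i<1. \<forall>j<1. a i j \<in> A) \<and> mat_norm p M 1 a \<le> 1}. ereal (mat_norm p N 1 (\<lambda>i j. \<phi> (a i j))))"
    proof (rule SUP_upper2[where i="\<lambda>i j. a"])
      show "(\<lambda>i j. a) \<in> {a. (\<forall>i<1. \<forall>j<1. a i j \<in> A) \<and> mat_norm p M 1 a \<le> 1}"
        using a mat_norm_1[OF S.p0, of M a] by simp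
    qed simp
    also have "\<dots> \<le> pcb_norm p M N A \<phi>"
      unfolding pcb_norm_def by (rule SUP_upper) auto
    finally show ?thesis .
  qed
  have z: "(\<lambda>f x. 0) \<in> A" "op_norm p M (\<lambda>f x. 0) \<le> 1" using S.A_zero S.op_norm_zero by auto
  have "pcb_norm p M N A \<phi> \<noteq> \<infinity>" using up by auto
  moreover have "pcb_norm p M N A \<phi> \<noteq> -\<infinity>" using low[OF z] by auto
  ultimately obtain r where r: "pcb_norm p M N A \<phi> = ereal r" by (cases "pcb_norm p M N A \<phi>") auto
  have "r \<le> map_norm p M N A \<phi>" using up r by simp
  moreover have "map_norm p M N A \<phi> \<le> r"
    unfolding map_norm_def
  proof (rule cSUP_least)
    show "{a \<in> A. op_norm p M a \<le> 1} \<noteq> {}" using z by blast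
  next
    fix a assume "a \<in> {a \<in> A. op_norm p M a \<le> 1}"
    then show "op_norm p N (\<phi> a) \<le> r" using low r by auto
  qed
  ultimately show ?thesis using r by simp
qed

end
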